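(* Let $\varphi>0$, $v_1,\dots,v_n>0$, let $\mathcal J\subseteq\{1,\dots,n\}^2$ be any set of ordered pairs ($(j,k)\in\mathcal J\Rightarrow j\le k$), $1-\alpha\in(0,1)$, $\delta=\alpha/(2|\mathcal J|)$, $v_{j:k}=\sum_{i=j}^kv_i$ and $Z_{j:k}=\frac1{v_{j:k}}\sum_{i=j}^kv_iY_i$. In the following two cases, the bounds $L^\alpha_{\mathbf Y,i}=\sup_{(j,k)\in\mathcal J:\mu_i\ge\mu_k}l^\delta(Z_{j:k},v_{j:k},\varphi,\kappa)$, $U^\alpha_{\mathbf Y,i}=\inf_{(j,k)\in\mathcal J:\mu_i\le\mu_j}u^\delta(Z_{j:k},v_{j:k},\varphi,\kappa)$ (which satisfy $\mathbb P(L^\alpha_{\mathbf Y,i}\le\mu_i\le U^\alpha_{\mathbf Y,i}\ \forall i)\ge1-\alpha$) are given explicitly by: (i) Gamma case ($Y_1,\dots,Y_n$ independent, $Y_i$ gamma with shape $v_i/\varphi$ and rate $v_i/(\varphi\mu_i)$, $\mu_i>0$, $\mu_1\le\dots\le\mu_n$): $L^\alpha_{\mathbf Y,i}=\sup_{(j,k)\in\mathcal J:\mu_i\ge\mu_k}\frac{v_{j:k}/\varphi}{q_\Gamma(1-\delta;v_{j:k}/\varphi,Z_{j:k})}\mathbf 1_{\{Z_{j:k}>0\}}$ and $U^\alpha_{\mathbf Y,i}=\inf_{(j,k)\in\mathcal J:\mu_i\le\mu_j}\frac{v_{j:k}/\varphi}{q_\Gamma(\delta;v_{j:k}/\varphi,Z_{j:k})}\mathbf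 1_{\{Z_{j:k}>0\}}$, where $q_\Gamma(\delta;\gamma,c)$ is the $\delta$-quantile of the gamma distribution with shape $\gamma$ and rate $c$. (ii) Normal case ($Y_1,\dots,Y_n$ independent, $Y_i\sim\mathcal N(\mu_i,\varphi/v_i)$, $\mu_1\le\dots\le\mu_n$): $L^\alpha_{\mathbf Y,i}=\sup_{(j,k)\in\mathcal J:\mu_i\ge\mu_k}Z_{j:k}-\frac{\Phi^{-1}(1-\delta)}{\sqrt{v_{j:k}/\varphi}}$ and $U^\alpha_{\mathbf Y,i}=\inf_{(j,k)\in\mathcal J:\mu_i\le\mu_j}Z_{j:k}-\frac{\Phi^{-1}(\delta)}{\sqrt{v_{j:k}/\varphi}}$, with $\Phi^{-1}(\delta)$ the $\delta$-quantile of the standard normal distribution.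
   Context: In both cases $Y_i\sim\mathrm{EDF}(\theta_i,v_i,\varphi,\kappa)$, an exponential dispersion family in reproductive form (density $\exp\{(y\theta-\kappa(\theta))/(\varphi/v)+a(y;v/\varphi)\}$) with mean $\mu_i=\kappa'(\theta_i)$ and canonical link $h=(\kappa')^{-1}$. For $W$ in this family with mean $\mu$ and volume $v$: $F(y;h(\mu),v,\varphi,\kappa)=\mathbb P(W\le y)$, $F^*(y;h(\mu),v,\varphi,\kappa)=\mathbb P(W<y)$; $l^{\delta}(y,v,\varphi,\kappa)=\inf\{\mu:F^*(y;h(\mu),v,\varphi,\kappa)\le1-\delta\}$, $u^{\delta}(y,v,\varphi,\kappa)=\sup\{\mu:F(y;h(\mu),v,\varphi,\kappa)\ge\delta\}$, over the mean parameter space ($(0,\infty)$ for gamma, $\mathbb R$ for normal), with $\inf\emptyset$ the supremum and $\sup\emptyset$ the infimum of the mean parameter space. *)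

theory Defs
  imports "HOL-Probability.Probability"
begin

definition gamma_density :: "real \<Rightarrow> real \<Rightarrow> real \<Rightarrow> real" where
  "gamma_density a b x =
     (if x > 0 then b powr a * x powr (a - 1) * exp (- b * x) / Gamma a else 0)"

definition gamma_distr :: "real \<Rightarrow> real \<Rightarrow> real measure" where
  "gamma_distr a b = density lborel (\<lambda>x. ennreal (gamma_density a b x))"

definition normal_distr :: "real \<Rightarrow> real \<Rightarrow> real measure" where
  "normal_distr m s = density lborel (\<lambda>x. ennreal (normal_density m s x))"

definition quantile :: "real measure \<Rightarrow> real \<Rightarrow> real" where
  "quantile M p = Inf {x. measure M {..x} \<ge> p}"

definition q_gamma :: "real \<Rightarrow> real \<Rightarrow> real \<Rightarrow> real" where
  "q_gamma p shape rate = quantile (gamma_distr shape rate) p"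

definition Phi_inv :: "real \<Rightarrow> real" where
  "Phi_inv p = quantile (normal_distr 0 1) p"

definition edf_gamma :: "real \<Rightarrow> real \<Rightarrow> real \<Rightarrow> real measure" where
  "edf_gamma mu v phi = gamma_distr (v / phi) (v / (phi * mu))"

definition edf_normal :: "real \<Rightarrow> real \<Rightarrow> real \<Rightarrow> real measure" where
  "edf_normal mu v phi = normal_distr mu (sqrt (phi / v))"

definition cdf_le :: "real measure \<Rightarrow> real \<Rightarrow> real" where
  "cdf_le M y = measure M {..y}"

definition cdf_lt :: "real measure \<Rightarrow> real \<Rightarrow> real" where
  "cdf_lt M y = measure M {..<y}"

text \<open>Generic: Ms = mean parameter space, D mu = law of W with mean mu.
  inf of the empty set is the supremum of Ms, sup of the empty set is the
  infimum of Ms (computed in the extended reals).\<close>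
definition l_bound :: "real set \<Rightarrow> (real \<Rightarrow> real measure) \<Rightarrow> real \<Rightarrow> real \<Rightarrow> ereal" where
  "l_bound Ms D y \<delta> =
     (let S = {mu \<in> Ms. cdf_lt (D mu) y \<le> 1 - \<delta>}
      in if S = {} then Sup (ereal ` Ms) else Inf (ereal ` S))"

definition u_bound :: "real set \<Rightarrow> (real \<Rightarrow> real measure) \<Rightarrow> real \<Rightarrow> real \<Rightarrow> ereal" where
  "u_bound Ms D y \<delta> =
     (let S = {mu \<in> Ms. cdf_le (D mu) y \<ge> \<delta>}
      in if S = {} then Inf (ereal ` Ms) else Sup (ereal ` S))"

definition l_gamma :: "real \<Rightarrow> real \<Rightarrow> real \<Rightarrow> real \<Rightarrow> ereal" where
  "l_gamma \<delta> y v phi = l_bound {0<..} (\<lambda>mu. edf_gamma mu v phi) y \<delta>"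

definition u_gamma :: "real \<Rightarrow> real \<Rightarrow> real \<Rightarrow> real \<Rightarrow> ereal" where
  "u_gamma \<delta> y v phi = u_bound {0<..} (\<lambda>mu. edf_gamma mu v phi) y \<delta>"

definition l_normal :: "real \<Rightarrow> real \<Rightarrow> real \<Rightarrow> real \<Rightarrow> ereal" where
  "l_normal \<delta> y v phi = l_bound UNIV (\<lambda>mu. edf_normal mu v phi) y \<delta>"

definition u_normal :: "real \<Rightarrow> real \<Rightarrow> real \<Rightarrow> real \<Rightarrow> ereal" where
  "u_normal \<delta> y v phi = u_bound UNIV (\<lambda>mu. edf_normal mu v phi) y \<delta>"

definition vsum :: "(nat \<Rightarrow> real) \<Rightarrow> nat \<Rightarrow> nat \<Rightarrow> real" where
  "vsum v j k = (\<Sum>i=j..k. v i)"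

definition Zavg :: "(nat \<Rightarrow> real) \<Rightarrow> (nat \<Rightarrow> real) \<Rightarrow> nat \<Rightarrow> nat \<Rightarrow> real" where
  "Zavg v y j k = (\<Sum>i=j..k. v i * y i) / vsum v j k"

definition L_bound ::
  "(real \<Rightarrow> real \<Rightarrow> real \<Rightarrow> real \<Rightarrow> ereal) \<Rightarrow> real \<Rightarrow> (nat \<times> nat) set \<Rightarrow> real
   \<Rightarrow> (nat \<Rightarrow> real) \<Rightarrow> (nat \<Rightarrow> real) \<Rightarrow> (nat \<Rightarrow> real) \<Rightarrow> nat \<Rightarrow> ereal" where
  "L_bound l \<delta> J phi v y mu i =
     (SUP (j,k)\<in>{(j,k)\<in>J. mu i \<ge> mu k}. l \<delta> (Zavg v y j k) (vsum v j k) phi)"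

definition U_bound ::
  "(real \<Rightarrow> real \<Rightarrow> real \<Rightarrow> real \<Rightarrow> ereal) \<Rightarrow> real \<Rightarrow> (nat \<times> nat) set \<Rightarrow> real
   \<Rightarrow> (nat \<Rightarrow> real) \<Rightarrow> (nat \<Rightarrow> real) \<Rightarrow> (nat \<Rightarrow> real) \<Rightarrow> nat \<Rightarrow> ereal" where
  "U_bound u \<delta> J phi v y mu i =
     (INF (j,k)\<in>{(j,k)\<in>J. mu i \<le> mu j}. u \<delta> (Zavg v y j k) (vsum v j k) phi)"

end

theory Submission
  imports Defs
begin


lemma quant_props:
  fixes G :: "real \<Rightarrow> real"
  assumes cont: "\<And>t. isCont G t" and mono: "mono G" and top: "(G \<longlongrightarrow> 1) at_top"
    and bot: "(G \<longlongrightarrow> 0) at_bot" and strict: "\<And>s t. s < t \<Longrightarrow> 0 < G t \<Longrightarrow> G s < G t"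
    and p: "0 < p" "p < 1"
  shows "G (Inf {t. p \<le> G t}) = p" "\<And>t. p \<le> G t \<longleftrightarrow> Inf {t. p \<le> G t} \<le> t"
    "\<And>t. G t \<le> p \<longleftrightarrow> t \<le> Inf {t. p \<le> G t}"
proof -
  define S where "S = {t. p \<le> G t}"
  define Q where "Q = Inf S"
  have "eventually (\<lambda>t. G t > p) at_top" using order_tendstoD(1)[OF top p(2)] .
  then obtain N where N: "\<And>t. t \<ge> N \<Longrightarrow> G t > p" by (auto simp: eventually_at_top_linorder)
  hence "N \<in> S" unfolding S_def by (simp add: less_imp_le)
  hence ne: "S \<noteq> {}" by blast
  have "eventually (\<lambda>t. G t < p) at_bot" using order_tendstoD(2)[OF bot p(1)] .
  then obtain M where M: "\<And>t. t \<le> M \<Longrightarrow> G t < p" by (auto simp: eventually_at_bot_linorder)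
  have bdd: "bdd_below S" unfolding bdd_below_def
  proof (intro exI ballI)
    fix s assume "s \<in> S" hence "p \<le> G s" by (simp add: S_def)
    thus "M \<le> s" using M[of s] by (cases "s \<le> M") auto
  qed
  have contG: "continuous_on UNIV G" using cont by (simp add: continuous_at_imp_continuous_on)
  have clS: "closed S" unfolding S_def
    by (rule closed_Collect_le[OF continuous_on_const contG])
  have QS: "Q \<in> S" unfolding Q_def by (rule closed_contains_Inf[OF ne bdd clS])
  have lt: "G t < p" if "t < Q" for t
  proof (rule ccontr)
    assume "\<not> G t < p" hence "t \<in> S" by (simp add: S_def)
    hence "Q \<le> t" unfolding Q_def using bdd by (rule cInf_lower)
    with that show False by simp
  qed
  have clT: "closed {t. G t \<le> p}"
    by (rule closed_Collect_le[OF contG continuous_on_const])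
  have "{..<Q} \<subseteq> {t. G t \<le> p}" using lt by (auto intro: less_imp_le)
  hence "closure {..<Q} \<subseteq> {t. G t \<le> p}" using clT by (rule closure_minimal)
  hence "G Q \<le> p" by auto
  moreover have "p \<le> G Q" using QS by (simp add: S_def)
  ultimately have GQ: "G Q = p" by simp
  show "G (Inf {t. p \<le> G t}) = p" using GQ by (simp add: Q_def S_def)
  show "p \<le> G t \<longleftrightarrow> Inf {t. p \<le> G t} \<le> t" for t
  proof -
    have "p \<le> G t \<longleftrightarrow> Q \<le> t"
    proof
      assume "p \<le> G t" thus "Q \<le> t" using lt[of t] by (cases "t < Q") auto
    next
      assume "Q \<le> t" hence "G Q \<le> G t" by (rule monoD[OF mono])
      thus "p \<le> G t" using GQ by simp
    qed
    thus ?thesis by (simp add: Q_def S_def)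
  qed
  show "G t \<le> p \<longleftrightarrow> t \<le> Inf {t. p \<le> G t}" for t
  proof -
    have "G t \<le> p \<longleftrightarrow> t \<le> Q"
    proof
      assume a: "G t \<le> p" show "t \<le> Q"
      proof (rule ccontr)
        assume "\<not> t \<le> Q" hence "Q < t" by simp
        hence "G Q \<le> G t" using monoD[OF mono, of Q t] by simp
        hence "0 < G t" using GQ p by simp
        hence "G Q < G t" using strict \<open>Q < t\<close> by blast
        thus False using a GQ by simp
      qed
    next
      assume "t \<le> Q" hence "G t \<le> G Q" by (rule monoD[OF mono])
      thus "G t \<le> p" using GQ by simp
    qed
    thus ?thesis by (simp add: Q_def S_def)
  qed
qed

lemma gd_meas[measurable]: "gamma_density a b \<in> borel_measurable borel"
  unfolding gamma_density_def[abs_def] by measurable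

lemma density_scale:
  fixes f :: "real \<Rightarrow> real"
  assumes f[measurable]: "f \<in> borel_measurable borel" and c: "c > 0"
  shows "emeasure (density lborel (\<lambda>x. ennreal (f x))) {..x} =
         emeasure (density lborel (\<lambda>u. ennreal (c * f (t + c*u)))) {..(x - t)/c}"
proof -
  have "emeasure (density lborel (\<lambda>x. ennreal (f x))) {..x}
      = (\<integral>\<^sup>+u. ennreal (f u) * indicator {..x} u \<partial>lborel)"
    by (simp add: emeasure_density)
  also have "\<dots> = ennreal \<bar>c\<bar> * (\<integral>\<^sup>+u. ennreal (f (t + c*u)) * indicator {..x} (t + c*u) \<partial>lborel)"
    using c by (intro nn_integral_real_affine) auto
  also have "\<dots> = (\<integral>\<^sup>+u. ennreal \<bar>c\<bar> * (ennreal (f (t + c*u)) * indicator {..x} (t + c*u)) \<partial>lborel)"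
    by (subst nn_integral_cmult) auto
  also have "\<dots> = (\<integral>\<^sup>+u. ennreal (c * f (t + c*u)) * indicator {..(x-t)/c} u \<partial>lborel)"
  proof (intro nn_integral_cong)
    fix u :: real
    have i: "indicator {..x} (t + c*u) = (indicator {..(x-t)/c} u :: ennreal)"
      using c by (simp add: indicator_def pos_le_divide_eq algebra_simps)
    show "ennreal \<bar>c\<bar> * (ennreal (f (t + c*u)) * indicator {..x} (t + c*u)) =
          ennreal (c * f (t + c*u)) * indicator {..(x-t)/c} u"
      using c by (simp add: i ennreal_mult' mult.assoc)
  qed
  also have "\<dots> = emeasure (density lborel (\<lambda>u. ennreal (c * f (t + c*u)))) {..(x - t)/c}"
    by (simp add: emeasure_density)
  finally show ?thesis .
qed

definition Gg :: "real \<Rightarrow> real \<Rightarrow> real" where "Gg a t = measure (gamma_distr a 1) {..t}"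
definition Ph :: "real \<Rightarrow> real" where "Ph t = measure (normal_distr 0 1) {..t}"

lemma gd_scale:
  assumes b: "b > 0"
  shows "(1/b) * gamma_density a b (0 + (1/b) * u) = gamma_density a 1 u"
proof (cases "u > 0")
  case True
  have "b powr a * ((1/b) * u) powr (a - 1) = b * u powr (a - 1)"
  proof -
    have "((1/b) * u) powr (a - 1) = (1/b) powr (a-1) * u powr (a-1)" by (rule powr_mult)
    moreover have "b powr a * (1/b) powr (a-1) = b"
      using b by (simp add: powr_divide powr_diff)
    ultimately show ?thesis by (simp add: mult.assoc[symmetric])
  qed
  then show ?thesis using True b
    by (simp add: gamma_density_def)
next
  case False
  then have "\<not> 0 < u / b" using b by (simp add: zero_less_divide_iff)
  then show ?thesis using b False by (simp add: gamma_density_def)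
qed

lemma gamma_cdf_scale:
  assumes b: "b > 0"
  shows "measure (gamma_distr a b) {..x} = Gg a (b * x)"
proof -
  have "emeasure (gamma_distr a b) {..x} =
     emeasure (density lborel (\<lambda>u. ennreal ((1/b) * gamma_density a b (0 + (1/b)*u)))) {..(x - 0)/(1/b)}"
    unfolding gamma_distr_def using b by (intro density_scale) auto
  also have "\<dots> = emeasure (gamma_distr a 1) {..b*x}"
    unfolding gamma_distr_def gd_scale[OF b] by (simp add: mult.commute)
  finally show ?thesis by (simp add: Gg_def measure_def)
qed

lemma nd_scale:
  assumes s: "s > 0"
  shows "s * normal_density m s (m + s * u) = normal_density 0 1 u"
proof -
  have "sqrt (2 * pi * s\<^sup>2) = s * sqrt (2 * pi)"
    using s by (simp add: real_sqrt_mult)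
  moreover have "(s * u)\<^sup>2 / (2 * s\<^sup>2) = u\<^sup>2 / 2"
    using s by (simp add: power_mult_distrib)
  ultimately show ?thesis using s by (simp add: normal_density_def)
qed

lemma normal_cdf_scale:
  assumes s: "s > 0"
  shows "measure (normal_distr m s) {..x} = Ph ((x - m) / s)"
proof -
  have "emeasure (normal_distr m s) {..x} =
     emeasure (density lborel (\<lambda>u. ennreal (s * normal_density m s (m + s*u)))) {..(x - m)/s}"
    unfolding normal_distr_def using s by (intro density_scale) auto
  also have "\<dots> = emeasure (normal_distr 0 1) {..(x-m)/s}"
    unfolding normal_distr_def nd_scale[OF s] by simp
  finally show ?thesis by (simp add: Ph_def measure_def)
qed

lemma dens_lt:
  fixes f :: "real \<Rightarrow> ennreal"
  assumes [measurable]: "f \<in> borel_measurable borel"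
  shows "emeasure (density lborel f) {..<x} = emeasure (density lborel f) {..x}"
proof -
  have ae: "AE t in lborel. f t * indicator {..<x} t = f t * indicator {..x} t"
    using AE_lborel_singleton[of x] by eventually_elim (auto simp: indicator_def)
  have "emeasure (density lborel f) {..<x} = (\<integral>\<^sup>+t. f t * indicator {..<x} t \<partial>lborel)"
    by (rule emeasure_density) auto
  also have "\<dots> = (\<integral>\<^sup>+t. f t * indicator {..x} t \<partial>lborel)"
    by (rule nn_integral_cong_AE[OF ae])
  also have "\<dots> = emeasure (density lborel f) {..x}"
    by (rule emeasure_density[symmetric]) auto
  finally show ?thesis .
qed

lemma dens_sing:
  fixes f :: "real \<Rightarrow> ennreal"
  assumes [measurable]: "f \<in> borel_measurable borel"
  shows "emeasure (density lborel f) {x} = 0"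
proof -
  have ae: "AE t in lborel. f t * indicator {x} t = 0"
    using AE_lborel_singleton[of x] by eventually_elim (auto simp: indicator_def)
  have "emeasure (density lborel f) {x} = (\<integral>\<^sup>+t. f t * indicator {x} t \<partial>lborel)"
    by (rule emeasure_density) auto
  also have "\<dots> = 0"
    using ae by (simp add: nn_integral_0_iff_AE)
  finally show ?thesis .
qed

lemma dens_pos:
  fixes f :: "real \<Rightarrow> real"
  assumes [measurable]: "f \<in> borel_measurable borel" and cd: "c < d"
    and pos: "\<And>u. c < u \<Longrightarrow> u < d \<Longrightarrow> f u > 0"
  shows "emeasure (density lborel (\<lambda>x. ennreal (f x))) {c<..<d} > 0"
proof (rule ccontr)
  assume "\<not> ?thesis"
  hence "emeasure (density lborel (\<lambda>x. ennreal (f x))) {c<..<d} = 0" by simp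
  moreover have "emeasure (density lborel (\<lambda>x. ennreal (f x))) {c<..<d} =
     (\<integral>\<^sup>+t. ennreal (f t) * indicator {c<..<d} t \<partial>lborel)"
    by (rule emeasure_density) auto
  ultimately have "AE t in lborel. ennreal (f t) * indicator {c<..<d} t = 0"
    by (subst nn_integral_0_iff_AE[symmetric]) auto
  hence "AE t in lborel. t \<notin> {c<..<d}"
    by eventually_elim (use pos in \<open>force simp: indicator_def ennreal_eq_0_iff\<close>)
  hence "emeasure lborel {c<..<d} = 0"
    by (subst (asm) AE_iff_measurable[of "{c<..<d}"]) auto
  thus False using cd by simp
qed

lemma cdf_props:
  fixes f :: "real \<Rightarrow> real"
  assumes meas[measurable]: "f \<in> borel_measurable borel"
    and rd: "real_distribution (density lborel (\<lambda>x. ennreal (f x)))"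
    and pos: "\<And>s t. s < t \<Longrightarrow> 0 < measure (density lborel (\<lambda>x. ennreal (f x))) {..t} \<Longrightarrow>
       \<exists>c d. s \<le> c \<and> c < d \<and> d \<le> t \<and> (\<forall>u. c < u \<and> u < d \<longrightarrow> f u > 0)"
  defines "G \<equiv> \<lambda>t. measure (density lborel (\<lambda>x. ennreal (f x))) {..t}"
  shows "\<And>t. isCont G t" "mono G" "(G \<longlongrightarrow> 1) at_top" "(G \<longlongrightarrow> 0) at_bot"
    "\<And>s t. s < t \<Longrightarrow> 0 < G t \<Longrightarrow> G s < G t"
proof -
  let ?M = "density lborel (\<lambda>x. ennreal (f x))"
  interpret real_distribution ?M by (rule rd)
  have Gc: "G = cdf ?M" by (simp add: G_def cdf_def fun_eq_iff)
  show "isCont G t" for t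
    unfolding Gc isCont_cdf using dens_sing[of "\<lambda>x. ennreal (f x)" t] by (simp add: measure_def)
  show "mono G" unfolding Gc by (rule monoI) (rule cdf_nondecreasing)
  show "(G \<longlongrightarrow> 1) at_top" unfolding Gc by (rule cdf_lim_at_top_prob)
  show "(G \<longlongrightarrow> 0) at_bot" unfolding Gc by (rule cdf_lim_at_bot)
  show "G s < G t" if st: "s < t" "0 < G t" for s t
  proof -
    obtain c d where cd: "s \<le> c" "c < d" "d \<le> t" "\<And>u. c < u \<Longrightarrow> u < d \<Longrightarrow> f u > 0"
      using pos[OF st(1)] st(2) unfolding G_def by blast
    have "0 < emeasure ?M {c<..<d}" using dens_pos[OF meas cd(2) cd(4)] .
    hence "0 < measure ?M {c<..<d}" by (simp add: emeasure_eq_measure)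
    also have "\<dots> \<le> measure ?M {s<..t}" using cd by (intro finite_measure_mono) auto
    also have "\<dots> = G t - G s" unfolding Gc using st(1) by (rule cdf_diff_eq[symmetric])
    finally show ?thesis by simp
  qed
qed

lemma gamma_prob:
  assumes a: "a > 0"
  shows "real_distribution (gamma_distr a 1)"
proof -
  define g where "g t = indicator {0..} t * t powr (a - 1) / exp t" for t :: real
  have gnn: "0 \<le> g t" for t by (simp add: g_def)
  have Ga: "Gamma a > 0" using a by simp
  have ae: "AE t in lborel. ennreal (gamma_density a 1 t) * indicator UNIV t = ennreal (g t) * ennreal (1 / Gamma a)"
    using AE_lborel_singleton[of 0]
  proof eventually_elim
    case (elim t)
    have "gamma_density a 1 t = g t * (1 / Gamma a)"
      using elim by (cases "t > 0") (auto simp: gamma_density_def g_def exp_minus field_simps)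
    thus ?case using Ga by (subst ennreal_mult''[symmetric]) auto
  qed
  have "emeasure (gamma_distr a 1) UNIV = (\<integral>\<^sup>+t. ennreal (gamma_density a 1 t) * indicator UNIV t \<partial>lborel)"
    unfolding gamma_distr_def by (rule emeasure_density) auto
  also have "\<dots> = (\<integral>\<^sup>+t. ennreal (g t) * ennreal (1 / Gamma a) \<partial>lborel)"
    by (rule nn_integral_cong_AE[OF ae])
  also have "\<dots> = (\<integral>\<^sup>+t. ennreal (g t) \<partial>lborel) * ennreal (1 / Gamma a)"
    by (rule nn_integral_multc) (simp add: g_def)
  also have "(\<integral>\<^sup>+t. ennreal (g t) \<partial>lborel) = ennreal (Gamma a)"
    using Gamma_conv_nn_integral_real[OF a] by (simp add: g_def)
  also have "ennreal (Gamma a) * ennreal (1 / Gamma a) = 1"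
    using Ga by (simp add: ennreal_mult''[symmetric])
  finally have "emeasure (gamma_distr a 1) UNIV = 1" .
  hence "prob_space (gamma_distr a 1)" by (intro prob_spaceI) (simp add: gamma_distr_def)
  thus ?thesis
    by (simp add: real_distribution_def real_distribution_axioms_def gamma_distr_def)
qed

lemma Gg_nonpos: "t \<le> 0 \<Longrightarrow> Gg a t = 0"
proof -
  assume t: "t \<le> 0"
  have "emeasure (gamma_distr a 1) {..t} = (\<integral>\<^sup>+u. ennreal (gamma_density a 1 u) * indicator {..t} u \<partial>lborel)"
    unfolding gamma_distr_def by (rule emeasure_density) auto
  also have "\<dots> = 0"
    using t by (subst nn_integral_0_iff_AE) (auto intro!: AE_I2 simp: indicator_def gamma_density_def)
  finally show ?thesis by (simp add: Gg_def measure_def)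
qed

lemma Gg_props:
  assumes a: "a > 0"
  shows "\<And>t. isCont (Gg a) t" "mono (Gg a)" "(Gg a \<longlongrightarrow> 1) at_top" "(Gg a \<longlongrightarrow> 0) at_bot"
    "\<And>s t. s < t \<Longrightarrow> 0 < Gg a t \<Longrightarrow> Gg a s < Gg a t"
proof -
  have eq: "Gg a = (\<lambda>t. measure (density lborel (\<lambda>x. ennreal (gamma_density a 1 x))) {..t})"
    by (simp add: fun_eq_iff Gg_def gamma_distr_def)
  have rd: "real_distribution (density lborel (\<lambda>x. ennreal (gamma_density a 1 x)))"
    using gamma_prob[OF a] by (simp add: gamma_distr_def)
  have pos: "\<exists>c d. s \<le> c \<and> c < d \<and> d \<le> t \<and> (\<forall>u. c < u \<and> u < d \<longrightarrow> gamma_density a 1 u > 0)"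
    if st: "s < t" "0 < measure (density lborel (\<lambda>x. ennreal (gamma_density a 1 x))) {..t}" for s t
  proof -
    have "0 < Gg a t" using st(2) by (simp add: eq)
    hence t0: "t > 0" using Gg_nonpos[of t a] by (cases "t \<le> 0") auto
    show ?thesis
      using st(1) t0 a by (intro exI[of _ "max s 0"] exI[of _ t]) (auto simp: gamma_density_def)
  qed
  note P = cdf_props[OF gd_meas rd pos]
  show "\<And>t. isCont (Gg a) t" "mono (Gg a)" "(Gg a \<longlongrightarrow> 1) at_top" "(Gg a \<longlongrightarrow> 0) at_bot"
    "\<And>s t. s < t \<Longrightarrow> 0 < Gg a t \<Longrightarrow> Gg a s < Gg a t" unfolding eq using P by auto
qed

lemma Ph_props:
  shows "\<And>t. isCont Ph t" "mono Ph" "(Ph \<longlongrightarrow> 1) at_top" "(Ph \<longlongrightarrow> 0) at_bot"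
    "\<And>s t. s < t \<Longrightarrow> 0 < Ph t \<Longrightarrow> Ph s < Ph t"
proof -
  have eq: "Ph = (\<lambda>t. measure (density lborel (\<lambda>x. ennreal (normal_density 0 1 x))) {..t})"
    by (simp add: fun_eq_iff Ph_def normal_distr_def)
  have rd: "real_distribution (density lborel (\<lambda>x. ennreal (normal_density 0 1 x)))"
    using prob_space_normal_density[of 1 0]
    by (simp add: real_distribution_def real_distribution_axioms_def)
  have pos: "\<exists>c d. s \<le> c \<and> c < d \<and> d \<le> t \<and> (\<forall>u. c < u \<and> u < d \<longrightarrow> normal_density 0 1 u > 0)"
    if st: "s < t" for s t
    using st by (intro exI[of _ s] exI[of _ t]) (auto simp: normal_density_pos)
  note P = cdf_props[OF borel_measurable_normal_density rd pos]
  show "\<And>t. isCont Ph t" "mono Ph" "(Ph \<longlongrightarrow> 1) at_top" "(Ph \<longlongrightarrow> 0) at_bot"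
    "\<And>s t. s < t \<Longrightarrow> 0 < Ph t \<Longrightarrow> Ph s < Ph t" unfolding eq using P by auto
qed

lemma Inf_ereal_atLeast: "Inf (ereal ` {c..}) = ereal c"
  by (rule antisym) (auto intro: Inf_lower Inf_greatest)

lemma Sup_ereal_atMost: "Sup (ereal ` {..c}) = ereal c"
  by (rule antisym) (auto intro: Sup_upper Sup_least)

lemma Sup_ereal_Ioc: "c > 0 \<Longrightarrow> Sup (ereal ` {0<..c}) = ereal c"
  by (rule antisym) (auto intro: Sup_upper Sup_least)

lemma Inf_ereal_gt0: "Inf (ereal ` {0<..}) = 0"
proof -
  have ge: "0 \<le> Inf (ereal ` {0<..})" by (rule Inf_greatest) auto
  have "\<not> 0 < Inf (ereal ` {0<..})"
  proof
    assume "0 < Inf (ereal ` {0<..})"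
    then obtain r where r: "0 < ereal r" "ereal r < Inf (ereal ` {0<..})"
      using ereal_dense2 by blast
    hence "r > 0" by simp
    hence "Inf (ereal ` {0<..}) \<le> ereal r" by (intro Inf_lower) auto
    with r show False by simp
  qed
  with ge show ?thesis by simp
qed

lemma gamma_cdf_le: "a > 0 \<Longrightarrow> b > 0 \<Longrightarrow> cdf_le (gamma_distr a b) y = Gg a (b * y)"
  by (simp add: cdf_le_def gamma_cdf_scale)

lemma gamma_cdf_lt: "a > 0 \<Longrightarrow> b > 0 \<Longrightarrow> cdf_lt (gamma_distr a b) y = Gg a (b * y)"
  unfolding cdf_lt_def measure_def gamma_distr_def
  by (subst dens_lt) (auto simp: gamma_cdf_scale[symmetric] measure_def gamma_distr_def)

lemma normal_cdf_le: "s > 0 \<Longrightarrow> cdf_le (normal_distr m s) y = Ph ((y - m) / s)"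
  by (simp add: cdf_le_def normal_cdf_scale)

lemma normal_cdf_lt: "s > 0 \<Longrightarrow> cdf_lt (normal_distr m s) y = Ph ((y - m) / s)"
  unfolding cdf_lt_def measure_def normal_distr_def
  by (subst dens_lt) (auto simp: normal_cdf_scale[symmetric] measure_def normal_distr_def)

lemma Gg_quant:
  assumes a: "a > 0" and p: "0 < p" "p < 1"
  defines "Q \<equiv> Inf {t. p \<le> Gg a t}"
  shows "\<And>t. p \<le> Gg a t \<longleftrightarrow> Q \<le> t" "\<And>t. Gg a t \<le> p \<longleftrightarrow> t \<le> Q" "Q > 0"
proof -
  note qp = quant_props[OF Gg_props[OF a] p, folded Q_def]
  show "\<And>t. p \<le> Gg a t \<longleftrightarrow> Q \<le> t" by (rule qp(2))
  show "\<And>t. Gg a t \<le> p \<longleftrightarrow> t \<le> Q" by (rule qp(3))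
  show "Q > 0"
  proof (rule ccontr)
    assume "\<not> Q > 0" hence "Gg a Q = 0" by (intro Gg_nonpos) simp
    with qp(1) p show False by simp
  qed
qed

lemma q_gamma_eq:
  assumes a: "a > 0" and p: "0 < p" "p < 1" and y: "y > 0"
  shows "q_gamma p a y = Inf {t. p \<le> Gg a t} / y"
proof -
  define Q where "Q = Inf {t. p \<le> Gg a t}"
  have "{x. p \<le> measure (gamma_distr a y) {..x}} = {Q / y..}"
  proof -
    have "p \<le> measure (gamma_distr a y) {..x} \<longleftrightarrow> Q / y \<le> x" for x
    proof -
      have "p \<le> measure (gamma_distr a y) {..x} \<longleftrightarrow> Q \<le> y * x"
        unfolding gamma_cdf_scale[OF y] Q_def by (rule Gg_quant(1)[OF a p])
      also have "\<dots> \<longleftrightarrow> Q / y \<le> x" using y by (simp add: pos_divide_le_eq mult.commute)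
      finally show ?thesis .
    qed
    thus ?thesis by auto
  qed
  thus ?thesis by (simp add: q_gamma_def quantile_def Q_def)
qed

lemma Ph_quant:
  assumes p: "0 < p" "p < 1"
  shows "\<And>t. p \<le> Ph t \<longleftrightarrow> Phi_inv p \<le> t" "\<And>t. Ph t \<le> p \<longleftrightarrow> t \<le> Phi_inv p"
proof -
  have eq: "Phi_inv p = Inf {t. p \<le> Ph t}" by (simp add: Phi_inv_def quantile_def Ph_def)
  note qp = quant_props[OF Ph_props p, folded eq]
  show "\<And>t. p \<le> Ph t \<longleftrightarrow> Phi_inv p \<le> t" by (rule qp(2))
  show "\<And>t. Ph t \<le> p \<longleftrightarrow> t \<le> Phi_inv p" by (rule qp(3))
qed


lemma edf_gamma_cdf:
  assumes V: "V > 0" and phi: "phi > 0" and mu: "mu > 0"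
  shows "cdf_lt (edf_gamma mu V phi) y = Gg (V/phi) ((V/phi) * y / mu)"
    "cdf_le (edf_gamma mu V phi) y = Gg (V/phi) ((V/phi) * y / mu)"
proof -
  have a: "V/phi > 0" "V/(phi*mu) > 0" using V phi mu by auto
  have e: "V / (phi * mu) * y = (V/phi) * y / mu" by simp
  show "cdf_lt (edf_gamma mu V phi) y = Gg (V/phi) ((V/phi) * y / mu)"
    unfolding edf_gamma_def gamma_cdf_lt[OF a] e ..
  show "cdf_le (edf_gamma mu V phi) y = Gg (V/phi) ((V/phi) * y / mu)"
    unfolding edf_gamma_def gamma_cdf_le[OF a] e ..
qed

lemma l_gamma_eq:
  assumes V: "V > 0" and phi: "phi > 0" and d: "0 < \<delta>" "\<delta> < 1"
  shows "l_gamma \<delta> y V phi = ereal ((V/phi) / q_gamma (1-\<delta>) (V/phi) y * (if y > 0 then 1 else 0))"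
proof -
  define a where "a = V/phi"
  have a: "a > 0" using V phi by (simp add: a_def)
  have p: "0 < 1-\<delta>" "1-\<delta> < 1" using d by auto
  define Q where "Q = Inf {t. 1-\<delta> \<le> Gg a t}"
  note GQ = Gg_quant[OF a p, folded Q_def]
  show ?thesis
  proof (cases "y > 0")
    case True
    have "mu \<in> {0<..} \<and> cdf_lt (edf_gamma mu V phi) y \<le> 1-\<delta> \<longleftrightarrow> a*y/Q \<le> mu" for mu
    proof (cases "mu > 0")
      case mu: True
      have "cdf_lt (edf_gamma mu V phi) y \<le> 1-\<delta> \<longleftrightarrow> a*y/mu \<le> Q"
        unfolding edf_gamma_cdf(1)[OF V phi mu] a_def[symmetric] by (rule GQ(2))
      also have "\<dots> \<longleftrightarrow> a*y \<le> Q * mu" using mu by (simp add: pos_divide_le_eq)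
      also have "\<dots> \<longleftrightarrow> a*y/Q \<le> mu" using GQ(3) by (simp add: pos_divide_le_eq mult.commute)
      finally show ?thesis using mu by simp
    next
      case False
      have "a*y/Q > 0" using a True GQ(3) by simp
      thus ?thesis using False by simp
    qed
    hence S: "{mu \<in> {0<..}. cdf_lt (edf_gamma mu V phi) y \<le> 1-\<delta>} = {a*y/Q..}" by auto
    have q: "q_gamma (1-\<delta>) a y = Q/y" using q_gamma_eq[OF a p True] by (simp add: Q_def)
    show ?thesis
      unfolding l_gamma_def l_bound_def Let_def S a_def[symmetric] q
      using True by (simp add: Inf_ereal_atLeast)
  next
    case False
    have "mu \<in> {0<..} \<and> cdf_lt (edf_gamma mu V phi) y \<le> 1-\<delta> \<longleftrightarrow> mu > 0" for mu
    proof (cases "mu > 0")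
      case mu: True
      have "a*y/mu \<le> 0" using mu a False by (simp add: divide_nonpos_pos mult_nonneg_nonpos)
      hence "cdf_lt (edf_gamma mu V phi) y = 0"
        unfolding edf_gamma_cdf(1)[OF V phi mu] a_def[symmetric] by (rule Gg_nonpos)
      thus ?thesis using mu p by simp
    qed simp
    hence S: "{mu \<in> {0<..}. cdf_lt (edf_gamma mu V phi) y \<le> 1-\<delta>} = {0<..}" by auto
    show ?thesis
      unfolding l_gamma_def l_bound_def Let_def S
      using False by (simp add: Inf_ereal_gt0 zero_ereal_def)
  qed
qed

lemma u_gamma_eq:
  assumes V: "V > 0" and phi: "phi > 0" and d: "0 < \<delta>" "\<delta> < 1"
  shows "u_gamma \<delta> y V phi = ereal ((V/phi) / q_gamma \<delta> (V/phi) y * (if y > 0 then 1 else 0))"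
proof -
  define a where "a = V/phi"
  have a: "a > 0" using V phi by (simp add: a_def)
  have p: "0 < \<delta>" "\<delta> < 1" using d by auto
  define Q where "Q = Inf {t. \<delta> \<le> Gg a t}"
  note GQ = Gg_quant[OF a p, folded Q_def]
  show ?thesis
  proof (cases "y > 0")
    case True
    have "mu \<in> {0<..} \<and> \<delta> \<le> cdf_le (edf_gamma mu V phi) y \<longleftrightarrow> mu \<in> {0<..a*y/Q}" for mu
    proof (cases "mu > 0")
      case mu: True
      have "\<delta> \<le> cdf_le (edf_gamma mu V phi) y \<longleftrightarrow> Q \<le> a*y/mu"
        unfolding edf_gamma_cdf(2)[OF V phi mu] a_def[symmetric] by (rule GQ(1))
      also have "\<dots> \<longleftrightarrow> Q * mu \<le> a*y" using mu by (simp add: pos_le_divide_eq)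
      also have "\<dots> \<longleftrightarrow> mu \<le> a*y/Q" using GQ(3) by (simp add: pos_le_divide_eq mult.commute)
      finally show ?thesis using mu by simp
    qed simp
    hence S: "{mu \<in> {0<..}. \<delta> \<le> cdf_le (edf_gamma mu V phi) y} = {0<..a*y/Q}" unfolding set_eq_iff mem_Collect_eq by blast
    have pos: "a*y/Q > 0" using a True GQ(3) by simp
    hence ne: "{0<..a*y/Q} \<noteq> {}" by auto
    have q: "q_gamma \<delta> a y = Q/y" using q_gamma_eq[OF a p True] by (simp add: Q_def)
    have e2: "a / (Q/y) * (if y > 0 then 1 else 0) = a*y/Q" using True by simp
    show ?thesis
      unfolding u_gamma_def u_bound_def Let_def S a_def[symmetric] q e2 if_not_P[OF ne] Sup_ereal_Ioc[OF pos] ..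
  next
    case False
    have "\<not> (mu \<in> {0<..} \<and> \<delta> \<le> cdf_le (edf_gamma mu V phi) y)" for mu
    proof (cases "mu > 0")
      case mu: True
      have "a*y/mu \<le> 0" using mu a False by (simp add: divide_nonpos_pos mult_nonneg_nonpos)
      hence "cdf_le (edf_gamma mu V phi) y = 0"
        unfolding edf_gamma_cdf(2)[OF V phi mu] a_def[symmetric] by (rule Gg_nonpos)
      thus ?thesis using mu p by simp
    qed simp
    hence S: "{mu \<in> {0<..}. \<delta> \<le> cdf_le (edf_gamma mu V phi) y} = {}" by auto
    show ?thesis
      unfolding u_gamma_def u_bound_def Let_def S
      using False by (simp add: Inf_ereal_gt0 zero_ereal_def)
  qed
qed

lemma edf_normal_cdf:
  assumes V: "V > 0" and phi: "phi > 0"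
  shows "cdf_lt (edf_normal mu V phi) y = Ph ((y - mu) / sqrt (phi/V))"
    "cdf_le (edf_normal mu V phi) y = Ph ((y - mu) / sqrt (phi/V))"
proof -
  have s: "sqrt (phi/V) > 0" using V phi by simp
  show "cdf_lt (edf_normal mu V phi) y = Ph ((y - mu) / sqrt (phi/V))"
    unfolding edf_normal_def by (rule normal_cdf_lt[OF s])
  show "cdf_le (edf_normal mu V phi) y = Ph ((y - mu) / sqrt (phi/V))"
    unfolding edf_normal_def by (rule normal_cdf_le[OF s])
qed

lemma sqrt_inv_aux:
  assumes V: "V > 0" and phi: "phi > 0"
  shows "sqrt (phi/V) * Q = Q / sqrt (V/phi)"
  using V phi by (simp add: real_sqrt_divide field_simps)

lemma l_normal_eq:
  assumes V: "V > 0" and phi: "phi > 0" and d: "0 < \<delta>" "\<delta> < 1"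
  shows "l_normal \<delta> y V phi = ereal (y - Phi_inv (1 - \<delta>) / sqrt (V / phi))"
proof -
  define s where "s = sqrt (phi/V)"
  have s: "s > 0" using V phi by (simp add: s_def)
  have p: "0 < 1-\<delta>" "1-\<delta> < 1" using d by auto
  define Q where "Q = Phi_inv (1-\<delta>)"
  note PQ = Ph_quant[OF p, folded Q_def]
  have "mu \<in> UNIV \<and> cdf_lt (edf_normal mu V phi) y \<le> 1-\<delta> \<longleftrightarrow> y - s*Q \<le> mu" for mu
  proof -
    have "cdf_lt (edf_normal mu V phi) y \<le> 1-\<delta> \<longleftrightarrow> (y - mu)/s \<le> Q"
      unfolding edf_normal_cdf(1)[OF V phi] s_def[symmetric] by (rule PQ(2))
    also have "\<dots> \<longleftrightarrow> y - mu \<le> Q * s" using s by (rule pos_divide_le_eq)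
    also have "\<dots> \<longleftrightarrow> y - s*Q \<le> mu" by (simp add: mult.commute) linarith
    finally show ?thesis by simp
  qed
  hence S: "{mu \<in> UNIV. cdf_lt (edf_normal mu V phi) y \<le> 1-\<delta>} = {y - s*Q..}" by auto
  have e: "y - s*Q = y - Phi_inv (1 - \<delta>) / sqrt (V / phi)"
    unfolding s_def Q_def sqrt_inv_aux[OF V phi] ..
  show ?thesis
    unfolding l_normal_def l_bound_def Let_def S e
    by (simp add: Inf_ereal_atLeast)
qed

lemma u_normal_eq:
  assumes V: "V > 0" and phi: "phi > 0" and d: "0 < \<delta>" "\<delta> < 1"
  shows "u_normal \<delta> y V phi = ereal (y - Phi_inv \<delta> / sqrt (V / phi))"
proof -
  define s where "s = sqrt (phi/V)"
  have s: "s > 0" using V phi by (simp add: s_def)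
  have p: "0 < \<delta>" "\<delta> < 1" using d by auto
  define Q where "Q = Phi_inv \<delta>"
  note PQ = Ph_quant[OF p, folded Q_def]
  have "mu \<in> UNIV \<and> \<delta> \<le> cdf_le (edf_normal mu V phi) y \<longleftrightarrow> mu \<le> y - s*Q" for mu
  proof -
    have "\<delta> \<le> cdf_le (edf_normal mu V phi) y \<longleftrightarrow> Q \<le> (y - mu)/s"
      unfolding edf_normal_cdf(2)[OF V phi] s_def[symmetric] by (rule PQ(1))
    also have "\<dots> \<longleftrightarrow> Q * s \<le> y - mu" using s by (rule pos_le_divide_eq)
    also have "\<dots> \<longleftrightarrow> mu \<le> y - s*Q" by (simp add: mult.commute) linarith
    finally show ?thesis by simp
  qed
  hence S: "{mu \<in> UNIV. \<delta> \<le> cdf_le (edf_normal mu V phi) y} = {..y - s*Q}" by auto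
  have e: "y - s*Q = y - Phi_inv \<delta> / sqrt (V / phi)"
    unfolding s_def Q_def sqrt_inv_aux[OF V phi] ..
  show ?thesis
    unfolding u_normal_def u_bound_def Let_def S e
    by (simp add: Sup_ereal_atMost)
qed


theorem proposition5p2:
  fixes n :: nat and phi \<alpha> \<delta> :: real and v y :: "nat \<Rightarrow> real"
    and J :: "(nat \<times> nat) set"
  assumes phi_pos: "phi > 0"
    and v_pos: "\<forall>i\<in>{1..n}. v i > 0"
    and J_sub: "J \<subseteq> {1..n} \<times> {1..n}"
    and J_ord: "\<forall>(j,k)\<in>J. j \<le> k"
    and alpha: "0 < 1 - \<alpha>" "1 - \<alpha> < 1"
    and delta: "\<delta> = \<alpha> / (2 * real (card J))"
  shows
    "(\<forall>mu :: nat \<Rightarrow> real.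
        (\<forall>i\<in>{1..n}. mu i > 0) \<and> mono_on {1..n} mu \<longrightarrow>
        (\<forall>i\<in>{1..n}.
           L_bound l_gamma \<delta> J phi v y mu i =
             (SUP (j,k)\<in>{(j,k)\<in>J. mu i \<ge> mu k}.
                ereal ((vsum v j k / phi) / q_gamma (1 - \<delta>) (vsum v j k / phi) (Zavg v y j k)
                       * (if Zavg v y j k > 0 then 1 else 0))) \<and>
           U_bound u_gamma \<delta> J phi v y mu i =
             (INF (j,k)\<in>{(j,k)\<in>J. mu i \<le> mu j}.
                ereal ((vsum v j k / phi) / q_gamma \<delta> (vsum v j k / phi) (Zavg v y j k)
                       * (if Zavg v y j k > 0 then 1 else 0)))))
     \<and>
     (\<forall>mu :: nat \<Rightarrow> real.
        mono_on {1..n} mu \<longrightarrow>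
        (\<forall>i\<in>{1..n}.
           L_bound l_normal \<delta> J phi v y mu i =
             (SUP (j,k)\<in>{(j,k)\<in>J. mu i \<ge> mu k}.
                ereal (Zavg v y j k - Phi_inv (1 - \<delta>) / sqrt (vsum v j k / phi))) \<and>
           U_bound u_normal \<delta> J phi v y mu i =
             (INF (j,k)\<in>{(j,k)\<in>J. mu i \<le> mu j}.
                ereal (Zavg v y j k - Phi_inv \<delta> / sqrt (vsum v j k / phi)))))"
proof -
  have fin: "finite J" using J_sub by (rule finite_subset) auto
  have d1: "0 < \<delta>" and d2: "\<delta> < 1" if "(j,k) \<in> J" for j k
  proof -
    from that have "J \<noteq> {}" by auto
    hence c: "real (card J) \<ge> 1" using fin by (simp add: Suc_le_eq card_gt_0_iff)
    have a: "0 < \<alpha>" "\<alpha> < 1" using alpha by auto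
    show "0 < \<delta>" unfolding delta using a c by simp
    have "\<alpha> / (2 * real (card J)) \<le> \<alpha> / 2"
      using a c by (intro divide_left_mono) auto
    thus "\<delta> < 1" unfolding delta using a by simp
  qed
  have Vpos: "vsum v j k > 0" if "(j,k) \<in> J" for j k
  proof -
    have jk: "j \<le> k" using J_ord that by auto
    have sub: "{j..k} \<subseteq> {1..n}" using J_sub that by auto
    show ?thesis unfolding vsum_def
      by (rule sum_pos) (use jk sub v_pos in auto)
  qed
  have L1: "l_gamma \<delta> (Zavg v y j k) (vsum v j k) phi =
      ereal ((vsum v j k / phi) / q_gamma (1 - \<delta>) (vsum v j k / phi) (Zavg v y j k)
                       * (if Zavg v y j k > 0 then 1 else 0))" if "(j,k) \<in> J" for j k
    by (rule l_gamma_eq[OF Vpos[OF that] phi_pos d1[OF that] d2[OF that]])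
  have U1: "u_gamma \<delta> (Zavg v y j k) (vsum v j k) phi =
      ereal ((vsum v j k / phi) / q_gamma \<delta> (vsum v j k / phi) (Zavg v y j k)
                       * (if Zavg v y j k > 0 then 1 else 0))" if "(j,k) \<in> J" for j k
    by (rule u_gamma_eq[OF Vpos[OF that] phi_pos d1[OF that] d2[OF that]])
  have L2: "l_normal \<delta> (Zavg v y j k) (vsum v j k) phi =
      ereal (Zavg v y j k - Phi_inv (1 - \<delta>) / sqrt (vsum v j k / phi))" if "(j,k) \<in> J" for j k
    by (rule l_normal_eq[OF Vpos[OF that] phi_pos d1[OF that] d2[OF that]])
  have U2: "u_normal \<delta> (Zavg v y j k) (vsum v j k) phi =
      ereal (Zavg v y j k - Phi_inv \<delta> / sqrt (vsum v j k / phi))" if "(j,k) \<in> J" for j k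
    by (rule u_normal_eq[OF Vpos[OF that] phi_pos d1[OF that] d2[OF that]])
  show ?thesis
    unfolding L_bound_def U_bound_def
  proof (intro conjI allI impI ballI)
    fix mu :: "nat \<Rightarrow> real" and i
    show "(SUP (j,k)\<in>{(j,k)\<in>J. mu i \<ge> mu k}. l_gamma \<delta> (Zavg v y j k) (vsum v j k) phi) =
             (SUP (j,k)\<in>{(j,k)\<in>J. mu i \<ge> mu k}.
                ereal ((vsum v j k / phi) / q_gamma (1 - \<delta>) (vsum v j k / phi) (Zavg v y j k)
                       * (if Zavg v y j k > 0 then 1 else 0)))"
      by (rule SUP_cong[OF refl]) (auto simp: L1)
    show "(INF (j,k)\<in>{(j,k)\<in>J. mu i \<le> mu j}. u_gamma \<delta> (Zavg v y j k) (vsum v j k) phi) =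
             (INF (j,k)\<in>{(j,k)\<in>J. mu i \<le> mu j}.
                ereal ((vsum v j k / phi) / q_gamma \<delta> (vsum v j k / phi) (Zavg v y j k)
                       * (if Zavg v y j k > 0 then 1 else 0)))"
      by (rule INF_cong[OF refl]) (auto simp: U1)
  next
    fix mu :: "nat \<Rightarrow> real" and i
    show "(SUP (j,k)\<in>{(j,k)\<in>J. mu i \<ge> mu k}. l_normal \<delta> (Zavg v y j k) (vsum v j k) phi) =
             (SUP (j,k)\<in>{(j,k)\<in>J. mu i \<ge> mu k}.
                ereal (Zavg v y j k - Phi_inv (1 - \<delta>) / sqrt (vsum v j k / phi)))"
      by (rule SUP_cong[OF refl]) (auto simp: L2)
    show "(INF (j,k)\<in>{(j,k)\<in>J. mu i \<le> mu j}. u_normal \<delta> (Zavg v y j k) (vsum v j k) phi) =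
             (INF (j,k)\<in>{(j,k)\<in>J. mu i \<le> mu j}.
                ereal (Zavg v y j k - Phi_inv \<delta> / sqrt (vsum v j k / phi)))"
      by (rule INF_cong[OF refl]) (auto simp: U2)
  qed
qed

end
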